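(* Let $S\in\mathbb{R}^{n\times n}$ be real symmetric, $D\in\mathbb{R}^{r\times r}$ diagonal, and $X\in\mathbb{R}^{n\times r}$ satisfy $(S-XX^{T})X=XD$. Then there exists $Y\in\mathbb{R}^{n\times r}$ with $Y^{T}Y$ diagonal such that $(S-YY^{T})Y=YD$, $YY^{T}=XX^{T}$, and $\langle D,Y^{T}Y\rangle=\langle D,X^{T}X\rangle$.
   Context: $\langle A,B\rangle=\mathrm{tr}(A^{T}B)$. *)

theory Defs
  imports "HOL-Analysis.Analysis"
begin

definition diagonal_mat :: "real^'n^'n \<Rightarrow> bool" where
  "diagonal_mat A \<longleftrightarrow> (\<forall>i j. i \<noteq> j \<longrightarrow> A $ i $ j = 0)"

definition frob_inner :: "real^'n^'m \<Rightarrow> real^'n^'m \<Rightarrow> real" where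
  "frob_inner A B = trace (transpose A ** B)"

end

theory Submission
  imports Defs
begin

lemma sym_inner:
  fixes A :: "real^'r^'r"
  assumes "transpose A = A"
  shows "x \<bullet> (A *v y) = (A *v x) \<bullet> y"
  by (metis assms dot_lmul_matrix transpose_transpose vector_transpose_matrix)

lemma quad_aux: "(a::real) > 0 \<Longrightarrow> 2*(b/a)*b - (b/a)^2*k = b^2*(2*a - k)/a^2"
  by (simp add: field_simps power2_eq_square)

lemma quad_zero:
  fixes b c :: real
  assumes "\<And>t. 2*t*b + t^2*c \<le> 0"
  shows "b = 0"
proof (rule ccontr)
  assume "b \<noteq> 0"
  define a where "a = \<bar>c\<bar> + 1"
  have pos: "a > 0" unfolding a_def by simp
  define t where "t = b / a"
  have "t^2 * (-\<bar>c\<bar>) \<le> t^2 * c" by (rule mult_left_mono) auto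
  hence 1: "2*t*b + t^2*c \<ge> 2*t*b - t^2*\<bar>c\<bar>" by simp
  have 2: "2*t*b - t^2*\<bar>c\<bar> = b^2*(2*a - \<bar>c\<bar>)/a^2"
    unfolding t_def using pos by (rule quad_aux)
  have 3: "b^2*(2*a - \<bar>c\<bar>)/a^2 > 0"
  proof -
    have "2*a - \<bar>c\<bar> > 0" unfolding a_def by simp
    moreover have "b^2 > 0" using \<open>b \<noteq> 0\<close> by simp
    ultimately show ?thesis using pos by simp
  qed
  show False using 1 2 3 assms[of t] by linarith
qed

lemma eig_exists:
  fixes A :: "real^'r^'r" and W :: "(real^'r) set"
  assumes sym: "transpose A = A" and sub: "subspace W" and nz: "W \<noteq> {0}"
    and inv: "\<forall>x\<in>W. A *v x \<in> W"
  shows "\<exists>v\<in>W. norm v = 1 \<and> (\<exists>\<mu>. A *v v = \<mu> *\<^sub>R v)"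
proof -
  define K where "K = W \<inter> sphere 0 1"
  define f where "f x = x \<bullet> (A *v x)" for x :: "real^'r"
  have "compact K" unfolding K_def
    by (rule closed_Int_compact) (simp_all add: closed_subspace sub)
  moreover have "K \<noteq> {}"
  proof -
    obtain w where w: "w \<in> W" "w \<noteq> 0" using nz sub subspace_0 by blast
    have "(1/norm w) *\<^sub>R w \<in> W" using w sub by (simp add: subspace_scale)
    moreover have "norm ((1/norm w) *\<^sub>R w) = 1" using w by simp
    ultimately show ?thesis unfolding K_def by auto
  qed
  moreover have "continuous_on K f"
  proof -
    have "continuous_on K ((*v) A)"
      by (rule linear_continuous_on) (rule matrix_vector_mul_bounded_linear)
    then show ?thesis unfolding f_def by (rule continuous_on_inner[OF continuous_on_id])
  qed
  ultimately obtain v where v: "v \<in> K" "\<forall>y\<in>K. f y \<le> f v"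
    using continuous_attains_sup by blast
  define M where "M = f v"
  have vW: "v \<in> W" and nv: "norm v = 1" using v(1) unfolding K_def by auto
  have vv: "v \<bullet> v = 1" using nv by (simp add: dot_square_norm)
  have bound: "f x \<le> M * (x \<bullet> x)" if "x \<in> W" for x
  proof (cases "x = 0")
    case True then show ?thesis by (simp add: f_def)
  next
    case False
    define u where "u = (1/norm x) *\<^sub>R x"
    have "u \<in> K" unfolding K_def u_def using that False sub by (simp add: subspace_scale)
    hence fu: "f u \<le> M" using v unfolding M_def by auto
    have fu2: "f u = f x / (norm x)^2" unfolding f_def u_def
      by (simp add: matrix_vector_mult_scaleR power2_eq_square inner_commute divide_simps)
    have xx: "x \<bullet> x = (norm x)^2" by (simp add: dot_square_norm)
    have np: "(norm x)^2 > 0" using False by simp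
    have e: "f x = f u * (norm x)^2" using fu2 np by simp
    have "f u * (norm x)^2 \<le> M * (norm x)^2" using fu np by (simp add: mult_right_mono)
    then have "f x \<le> M * (x \<bullet> x)" using e xx by simp
    then show ?thesis .
  qed
  define w where "w = A *v v - M *\<^sub>R v"
  have wW: "w \<in> W" unfolding w_def using inv vW sub by (simp add: subspace_diff subspace_scale)
  have "\<And>t. 2*t*(w \<bullet> w) + t^2*(f w - M * (w \<bullet> w)) \<le> 0"
  proof -
    fix t :: real
    have "v + t *\<^sub>R w \<in> W" using vW wW sub by (simp add: subspace_add subspace_scale)
    hence h: "f (v + t *\<^sub>R w) \<le> M * ((v + t *\<^sub>R w) \<bullet> (v + t *\<^sub>R w))" by (rule bound)
    have s: "v \<bullet> (A *v w) = (A *v v) \<bullet> w" by (rule sym_inner[OF sym])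
    have e1: "f (v + t *\<^sub>R w) = M + 2*t*((A *v v) \<bullet> w) + t^2 * f w"
      unfolding f_def M_def using s
      by (simp add: matrix_vector_right_distrib matrix_vector_mult_scaleR inner_add_left inner_add_right
          algebra_simps power2_eq_square inner_commute)
    have e2: "(v + t *\<^sub>R w) \<bullet> (v + t *\<^sub>R w) = 1 + 2*t*(v \<bullet> w) + t^2 * (w \<bullet> w)"
      using vv by (simp add: inner_add_left inner_add_right algebra_simps power2_eq_square inner_commute)
    have e3: "w \<bullet> w = (A *v v) \<bullet> w - M * (v \<bullet> w)"
      unfolding w_def by (simp add: inner_diff_left inner_commute)
    have id: "2*t*((A *v v) \<bullet> w - M * (v \<bullet> w)) + t^2*(f w - M * (w \<bullet> w))
        = (M + 2*t*((A *v v) \<bullet> w) + t^2 * f w) - M * (1 + 2*t*(v \<bullet> w) + t^2 * (w \<bullet> w))"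
      by (simp add: algebra_simps)
    show "2*t*(w \<bullet> w) + t^2*(f w - M * (w \<bullet> w)) \<le> 0"
    proof -
      have "2*t*(w \<bullet> w) = 2*t*((A *v v) \<bullet> w - M * (v \<bullet> w))" using e3 by simp
      then show ?thesis using h id unfolding e1 e2 by linarith
    qed
  qed
  hence "w \<bullet> w = 0" by (rule quad_zero)
  hence "w = 0" by simp
  hence "A *v v = M *\<^sub>R v" unfolding w_def by simp
  thus ?thesis using vW nv by blast
qed


lemma eig_basis:
  fixes A :: "real^'r^'r"
  assumes sym: "transpose A = A"
  shows "subspace W \<Longrightarrow> (\<forall>x\<in>W. A *v x \<in> W) \<Longrightarrow>
    \<exists>B. B \<subseteq> W \<and> span B = W \<and> (\<forall>v\<in>B. norm v = 1 \<and> (\<exists>\<mu>. A *v v = \<mu> *\<^sub>R v)) \<and> pairwise orthogonal B"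
proof (induction "dim W" arbitrary: W rule: less_induct)
  case less
  show ?case
  proof (cases "W = {0}")
    case True
    then show ?thesis by (intro exI[of _ "{}"]) auto
  next
    case False
    obtain v \<mu> where v: "v \<in> W" "norm v = 1" "A *v v = \<mu> *\<^sub>R v"
      using eig_exists[OF sym less.prems(1) False less.prems(2)] by blast
    have vv: "v \<bullet> v = 1" using v(2) by (simp add: dot_square_norm)
    define W' where "W' = W \<inter> {x. v \<bullet> x = 0}"
    have sW': "subspace W'" unfolding W'_def
      by (intro subspace_inter less.prems(1) subspace_hyperplane)
    have iW': "\<forall>x\<in>W'. A *v x \<in> W'"
    proof
      fix x assume x: "x \<in> W'"
      have "v \<bullet> (A *v x) = (A *v v) \<bullet> x" by (rule sym_inner[OF sym])
      also have "\<dots> = \<mu> * (v \<bullet> x)" using v(3) by simp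
      also have "\<dots> = 0" using x unfolding W'_def by simp
      finally show "A *v x \<in> W'" using x less.prems(2) unfolding W'_def by auto
    qed
    have "v \<notin> W'" using vv unfolding W'_def by simp
    hence "W' \<subset> W" using v(1) unfolding W'_def by blast
    have s1: "span W' = W'" using sW' by (simp add: span_eq_iff)
    have s2: "span W = W" using less.prems(1) by (simp add: span_eq_iff)
    have "span W' \<subset> span W" unfolding s1 s2 by fact
    hence "dim W' < dim W" by (rule dim_psubset)
    then obtain B' where B': "B' \<subseteq> W'" "span B' = W'"
      "\<forall>v\<in>B'. norm v = 1 \<and> (\<exists>\<mu>. A *v v = \<mu> *\<^sub>R v)" "pairwise orthogonal B'"
      using less.hyps[OF _ sW' iW'] by blast
    define B where "B = insert v B'"
    have "B \<subseteq> W" using B'(1) v(1) unfolding B_def W'_def by auto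
    moreover have "span B = W"
    proof
      show "span B \<subseteq> W" using \<open>B \<subseteq> W\<close> less.prems(1) by (simp add: span_minimal)
      show "W \<subseteq> span B"
      proof
        fix x assume x: "x \<in> W"
        define y where "y = x - (v \<bullet> x) *\<^sub>R v"
        have "y \<in> W'" unfolding W'_def y_def using x v(1) vv less.prems(1)
          by (simp add: subspace_diff subspace_scale inner_diff_right)
        hence "y \<in> span B" using B'(2) span_mono[of B' B] unfolding B_def by auto
        moreover have "(v \<bullet> x) *\<^sub>R v \<in> span B" unfolding B_def by (simp add: span_base span_scale)
        ultimately have "y + (v \<bullet> x) *\<^sub>R v \<in> span B" by (rule span_add)
        thus "x \<in> span B" unfolding y_def by simp
      qed
    qed
    moreover have "\<forall>u\<in>B. norm u = 1 \<and> (\<exists>\<mu>. A *v u = \<mu> *\<^sub>R u)"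
      using B'(3) v unfolding B_def by auto
    moreover have "pairwise orthogonal B"
      unfolding B_def using B'(1,4) unfolding W'_def
      by (auto simp: pairwise_insert orthogonal_def inner_commute)
    ultimately show ?thesis by blast
  qed
qed


lemma commuting_diag:
  fixes G :: "real^'r^'r" and d :: "'r \<Rightarrow> real"
  assumes sym: "transpose G = G" and comm: "\<And>i j. G$i$j \<noteq> 0 \<Longrightarrow> d i = d j"
  shows "\<exists>q :: 'r \<Rightarrow> real^'r. (\<forall>k l. q k \<bullet> q l = (if k = l then 1 else 0))
     \<and> (\<forall>k. \<exists>\<mu>. G *v q k = \<mu> *\<^sub>R q k) \<and> (\<forall>k i. q k $ i \<noteq> 0 \<longrightarrow> d i = d k)"
proof -
  define Wc where "Wc c = {x :: real^'r. \<forall>i. d i \<noteq> c \<longrightarrow> x$i = 0}" for c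
  define Kc where "Kc c = {i. d i = c}" for c
  have sub: "subspace (Wc c)" for c unfolding Wc_def subspace_def by auto
  have inv: "\<forall>x\<in>Wc c. G *v x \<in> Wc c" for c
  proof
    fix x assume x: "x \<in> Wc c"
    have "(G *v x) $ i = 0" if "d i \<noteq> c" for i
    proof -
      have "G$i$j * x$j = 0" for j
      proof (cases "G$i$j = 0")
        case False
        then have "d j = d i" using comm by metis
        then show ?thesis using x that unfolding Wc_def by auto
      qed simp
      then have "(\<Sum>j\<in>UNIV. G$i$j * x$j) = 0" by (intro sum.neutral) simp
      then show ?thesis unfolding matrix_vector_mult_def by simp
    qed
    then show "G *v x \<in> Wc c" unfolding Wc_def by auto
  qed
  have dimW: "dim (Wc c) = card (Kc c)" for c
  proof -
    define E where "E = (\<lambda>i. axis i (1::real)) ` Kc c"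
    have indE: "independent E"
      by (rule pairwise_orthogonal_independent)
        (auto simp: E_def pairwise_def orthogonal_def inner_axis_axis axis_eq_axis)
    have "span E = Wc c"
    proof
      show "span E \<subseteq> Wc c"
        by (rule span_minimal[OF _ sub]) (auto simp: E_def Wc_def Kc_def axis_def)
      show "Wc c \<subseteq> span E"
      proof
        fix x assume x: "x \<in> Wc c"
        have "x = (\<Sum>i\<in>UNIV. (x$i) *s axis i 1)" by (simp add: basis_expansion)
        also have "\<dots> = (\<Sum>i\<in>Kc c. (x$i) *s axis i 1)"
          by (rule sum.mono_neutral_right) (use x in \<open>auto simp: Wc_def Kc_def\<close>)
        also have "\<dots> \<in> span E"
          unfolding scalar_mult_eq_scaleR
          by (intro span_sum span_scale span_base) (auto simp: E_def)
        finally show "x \<in> span E" .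
      qed
    qed
    moreover have sp: "span (Wc c) = Wc c" by (rule span_eq_iff[THEN iffD2, OF sub])
    ultimately have "dim (Wc c) = card E" by (intro dim_eq_card[OF _ indE]) (simp only:)
    also have "card E = card (Kc c)" unfolding E_def
      by (rule card_image) (auto simp: inj_on_def axis_eq_axis)
    finally show ?thesis .
  qed
  have "\<forall>c. \<exists>B. B \<subseteq> Wc c \<and> span B = Wc c \<and> (\<forall>v\<in>B. norm v = 1 \<and> (\<exists>\<mu>. G *v v = \<mu> *\<^sub>R v))
      \<and> pairwise orthogonal B"
    using eig_basis[OF sym sub inv] by blast
  then obtain B where B: "\<And>c. B c \<subseteq> Wc c" "\<And>c. span (B c) = Wc c"
    "\<And>c. \<forall>v\<in>B c. norm v = 1 \<and> (\<exists>\<mu>. G *v v = \<mu> *\<^sub>R v)" "\<And>c. pairwise orthogonal (B c)"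
    by metis
  have indB: "independent (B c)" for c
    using B(3)[of c] by (intro pairwise_orthogonal_independent[OF B(4)]) auto
  have finB: "finite (B c)" for c using indB independent_bound by blast
  have cardB: "card (B c) = card (Kc c)" for c
  proof -
    have sp: "span (Wc c) = Wc c" by (rule span_eq_iff[THEN iffD2, OF sub])
    have "dim (Wc c) = card (B c)" by (rule dim_eq_card[OF _ indB]) (simp only: sp B(2))
    then show ?thesis using dimW by simp
  qed
  have "\<forall>c. \<exists>h. bij_betw h (Kc c) (B c)"
  proof
    fix c
    show "\<exists>h. bij_betw h (Kc c) (B c)"
      by (rule finite_same_card_bij[OF _ finB]) (simp_all add: cardB)
  qed
  then obtain h where h: "\<And>c. bij_betw (h c) (Kc c) (B c)" by metis
  define q where "q k = h (d k) k" for k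
  have qB: "q k \<in> B (d k)" for k
    unfolding q_def using bij_betw_apply[OF h] by (auto simp: Kc_def)
  have qW: "q k \<in> Wc (d k)" for k using qB B(1) by blast
  have supp: "\<forall>k i. q k $ i \<noteq> 0 \<longrightarrow> d i = d k" using qW unfolding Wc_def by blast
  have eig: "\<forall>k. \<exists>\<mu>. G *v q k = \<mu> *\<^sub>R q k" using qB B(3) by blast
  have orth: "q k \<bullet> q l = (if k = l then 1 else 0)" for k l
  proof (cases "k = l")
    case True
    have "norm (q l) = 1" using qB[of l] B(3)[of "d l"] by blast
    then show ?thesis using True by (simp add: dot_square_norm)
  next
    case False
    show ?thesis
    proof (cases "d k = d l")
      case True
      have "q k \<noteq> q l" using False True bij_betw_imp_inj_on[OF h[of "d k"]]
        unfolding q_def inj_on_def Kc_def by auto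
      then show ?thesis using False qB[of k] qB[of l] True B(4)[of "d k"]
        by (auto simp: pairwise_def orthogonal_def)
    next
      case dn: False
      have "q k $ i * q l $ i = 0" for i
        using supp dn by (metis mult_eq_0_iff)
      then have "(\<Sum>i\<in>UNIV. q k $ i * q l $ i) = 0" by (intro sum.neutral) simp
      then show ?thesis using False unfolding inner_vec_def by simp
    qed
  qed
  show ?thesis using orth eig supp by blast
qed


lemma mat_sub_ldistrib: "(A::real^'n^'m) ** (B - C) = A ** B - A ** (C::real^'p^'n)"
  by (simp add: vec_eq_iff matrix_matrix_mult_def algebra_simps sum_subtractf)

lemma mat_sub_rdistrib: "((A::real^'n^'m) - B) ** (C::real^'p^'n) = A ** C - B ** C"
  by (simp add: vec_eq_iff matrix_matrix_mult_def algebra_simps sum_subtractf)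

lemma transpose_sub: "transpose ((A::real^'n^'m) - B) = transpose A - transpose B"
  by (simp add: vec_eq_iff transpose_def)

lemma diag_entry: "diagonal_mat D \<Longrightarrow> D$i$k = (if k = i then D$i$i else 0)"
  unfolding diagonal_mat_def by auto

lemma diag_left: "diagonal_mat (D::real^'n^'n) \<Longrightarrow> (D ** (M::real^'p^'n))$i$j = D$i$i * M$i$j"
proof -
  assume "diagonal_mat D"
  then have "(\<Sum>k\<in>UNIV. D$i$k * M$k$j) = (\<Sum>k\<in>UNIV. if k = i then D$i$i * M$i$j else 0)"
    by (intro sum.cong refl) (subst diag_entry, auto)
  then show ?thesis by (simp add: matrix_matrix_mult_def)
qed

lemma diag_right: "diagonal_mat (D::real^'n^'n) \<Longrightarrow> ((M::real^'n^'p) ** D)$i$j = M$i$j * D$j$j"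
proof -
  assume "diagonal_mat D"
  then have "(\<Sum>k\<in>UNIV. M$i$k * D$k$j) = (\<Sum>k\<in>UNIV. if k = j then M$i$j * D$j$j else 0)"
    by (intro sum.cong refl) (auto simp: diagonal_mat_def)
  then show ?thesis by (simp add: matrix_matrix_mult_def)
qed

lemma diag_transpose: "diagonal_mat (D::real^'n^'n) \<Longrightarrow> transpose D = D"
  unfolding diagonal_mat_def transpose_def vec_eq_iff by (metis vec_lambda_beta)

lemma quad_entry:
  fixes Q G :: "real^'r^'r"
  shows "(transpose Q ** G ** Q) $ k $ l = column k Q \<bullet> (G *v column l Q)"
proof -
  have "(transpose Q ** G ** Q) $ k $ l = (\<Sum>j\<in>UNIV. (\<Sum>i\<in>UNIV. Q$i$k * G$i$j) * Q$j$l)"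
    by (simp add: matrix_matrix_mult_def transpose_def)
  also have "\<dots> = (\<Sum>j\<in>UNIV. \<Sum>i\<in>UNIV. Q$i$k * (G$i$j * Q$j$l))"
    by (simp add: sum_distrib_right mult.assoc)
  also have "\<dots> = (\<Sum>i\<in>UNIV. \<Sum>j\<in>UNIV. Q$i$k * (G$i$j * Q$j$l))"
    by (rule sum.swap)
  also have "\<dots> = (\<Sum>i\<in>UNIV. Q$i$k * (\<Sum>j\<in>UNIV. G$i$j * Q$j$l))"
    by (simp add: sum_distrib_left)
  also have "\<dots> = column k Q \<bullet> (G *v column l Q)"
    by (simp add: inner_vec_def matrix_vector_mult_def column_def)
  finally show ?thesis .
qed


theorem lemma22:
  fixes S :: "real^'n^'n" and D :: "real^'r^'r" and X :: "real^'r^'n"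
  assumes "transpose S = S"
    and "diagonal_mat D"
    and "(S - X ** transpose X) ** X = X ** D"
  shows "\<exists>Y :: real^'r^'n. diagonal_mat (transpose Y ** Y)
           \<and> (S - Y ** transpose Y) ** Y = Y ** D
           \<and> Y ** transpose Y = X ** transpose X
           \<and> frob_inner D (transpose Y ** Y) = frob_inner D (transpose X ** X)"
proof -
  define G where "G = transpose X ** X"
  define d where "d i = D$i$i" for i
  have symG: "transpose G = G" unfolding G_def by (simp add: matrix_transpose_mul)
  have DT: "transpose D = D" by (rule diag_transpose[OF assms(2)])
  define L where "L = transpose X ** S ** X"
  have symL: "transpose L = L" unfolding L_def
    by (simp add: matrix_transpose_mul assms(1) matrix_mul_assoc)
  have "transpose X ** ((S - X ** transpose X) ** X) = transpose X ** (X ** D)"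
    using assms(3) by simp
  hence eq: "L - G ** G = G ** D"
    unfolding L_def G_def by (simp add: mat_sub_rdistrib mat_sub_ldistrib matrix_mul_assoc)
  have "transpose (G ** D) = G ** D"
    unfolding eq[symmetric] by (simp add: transpose_sub symL matrix_transpose_mul symG)
  hence DG: "D ** G = G ** D" using DT symG by (simp add: matrix_transpose_mul)
  have comm: "d i = d j" if "G$i$j \<noteq> 0" for i j
  proof -
    have "(D ** G)$i$j = (G ** D)$i$j" using DG by simp
    hence "d i * G$i$j = G$i$j * d j"
      unfolding d_def diag_left[OF assms(2)] diag_right[OF assms(2)] .
    thus ?thesis using that by simp
  qed
  obtain q :: "'r \<Rightarrow> real^'r" where
    q: "\<forall>k l. q k \<bullet> q l = (if k = l then 1 else 0)" "\<forall>k. \<exists>\<mu>. G *v q k = \<mu> *\<^sub>R q k"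
       "\<forall>k i. q k $ i \<noteq> 0 \<longrightarrow> d i = d k"
    using commuting_diag[where d=d, OF symG comm] by blast
  define Q :: "real^'r^'r" where "Q = (\<chi> i k. q k $ i)"
  have colQ: "column k Q = q k" for k unfolding Q_def column_def by (simp add: vec_eq_iff)
  have QTQ: "transpose Q ** Q = mat 1"
  proof -
    have "(transpose Q ** Q) $ k $ l = mat 1 $ k $ l" for k l
    proof -
      have "(transpose Q ** Q) $ k $ l = (\<Sum>i\<in>UNIV. q k $ i * q l $ i)"
        by (simp add: matrix_matrix_mult_def transpose_def Q_def)
      also have "\<dots> = q k \<bullet> q l" by (simp add: inner_vec_def)
      finally show ?thesis using q(1) by (simp add: mat_def)
    qed
    thus ?thesis by (simp add: vec_eq_iff)
  qed
  have QQT: "Q ** transpose Q = mat 1" by (rule matrix_left_right_inverse1[OF QTQ])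
  have DQ: "D ** Q = Q ** D"
  proof -
    have "(D ** Q) $ i $ k = (Q ** D) $ i $ k" for i k
    proof -
      have "d i * Q$i$k = Q$i$k * d k"
        using q(3) unfolding Q_def by (cases "q k $ i = 0") auto
      thus ?thesis unfolding diag_left[OF assms(2)] diag_right[OF assms(2)] d_def .
    qed
    thus ?thesis by (simp add: vec_eq_iff)
  qed
  define Y where "Y = X ** Q"
  have YTY: "transpose Y ** Y = transpose Q ** G ** Q"
    unfolding Y_def G_def by (simp add: matrix_transpose_mul matrix_mul_assoc)
  have YYT: "Y ** transpose Y = X ** transpose X"
  proof -
    have "Y ** transpose Y = X ** (Q ** transpose Q) ** transpose X"
      unfolding Y_def by (simp add: matrix_transpose_mul matrix_mul_assoc)
    thus ?thesis using QQT by simp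
  qed
  have diag: "diagonal_mat (transpose Y ** Y)"
    unfolding diagonal_mat_def YTY
  proof (intro allI impI)
    fix k l :: 'r assume "k \<noteq> l"
    obtain \<mu> where "G *v q l = \<mu> *\<^sub>R q l" using q(2) by blast
    hence "q k \<bullet> (G *v q l) = 0" using q(1) \<open>k \<noteq> l\<close> by simp
    thus "(transpose Q ** G ** Q) $ k $ l = 0" unfolding quad_entry colQ .
  qed
  have eqn: "(S - Y ** transpose Y) ** Y = Y ** D"
  proof -
    have "(S - Y ** transpose Y) ** Y = ((S - X ** transpose X) ** X) ** Q"
      unfolding YYT by (simp add: Y_def matrix_mul_assoc)
    also have "\<dots> = X ** (D ** Q)" using assms(3) by (simp add: matrix_mul_assoc)
    also have "\<dots> = Y ** D" unfolding DQ Y_def by (simp add: matrix_mul_assoc)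
    finally show ?thesis .
  qed
  have frob: "frob_inner D (transpose Y ** Y) = frob_inner D (transpose X ** X)"
  proof -
    have "frob_inner D (transpose Y ** Y) = trace ((D ** transpose Q ** G) ** Q)"
      unfolding frob_inner_def YTY DT by (simp add: matrix_mul_assoc)
    also have "\<dots> = trace (Q ** (D ** transpose Q ** G))" by (rule trace_mul_sym)
    also have "Q ** (D ** transpose Q ** G) = (Q ** D) ** transpose Q ** G"
      by (simp add: matrix_mul_assoc)
    also have "\<dots> = D ** (Q ** transpose Q) ** G" unfolding DQ[symmetric] by (simp add: matrix_mul_assoc)
    also have "\<dots> = D ** G" using QQT by simp
    finally show ?thesis unfolding frob_inner_def DT G_def .
  qed
  show ?thesis using diag eqn YYT frob by blast
qed

end
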